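(* Let $\mathcal{F}$ be the class of multiplicative functions $f$ from the positive integers to the nonnegative integers such that $f(p^{k-1})\le f(p^k)$ for every prime $p$ and every integer $k\ge 1$. The set of real numbers $\delta$ for which there exists $f\in\mathcal{F}$ such that the set of $f$-practical numbers has asymptotic density $\delta$ is dense in $[0,1]$.
   Context: A function $f$ is multiplicative if $f(1)=1$ and $f(ab)=f(a)f(b)$ whenever $\gcd(a,b)=1$. For such $f$ put $S_f(n)=\sum_{d\mid n} f(d)$. A positive integer $n$ is called $f$-practical if for every positive integer $m\le S_f(n)$ there is a set $\mathcal{D}$ of (distinct) positive divisors of $n$ with $m=\sum_{d\in\mathcal{D}} f(d)$. *)

theory Defs
  imports "HOL-Analysis.Analysis"
begin

(* Functions on the positive integers are modelled as nat => nat; the value at 0 is irrelevant. *)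

definition multiplicative :: "(nat \<Rightarrow> nat) \<Rightarrow> bool" where
  "multiplicative f \<longleftrightarrow> f 1 = 1 \<and>
     (\<forall>a b. a > 0 \<longrightarrow> b > 0 \<longrightarrow> coprime a b \<longrightarrow> f (a * b) = f a * f b)"

definition classF :: "(nat \<Rightarrow> nat) set" where
  "classF = {f. multiplicative f \<and>
     (\<forall>p k. prime p \<longrightarrow> k \<ge> 1 \<longrightarrow> f (p ^ (k - 1)) \<le> f (p ^ k))}"

definition S_f :: "(nat \<Rightarrow> nat) \<Rightarrow> nat \<Rightarrow> nat" where
  "S_f f n = (\<Sum>d\<in>{d. d dvd n}. f d)"

definition f_practical :: "(nat \<Rightarrow> nat) \<Rightarrow> nat \<Rightarrow> bool" where
  "f_practical f n \<longleftrightarrow> n > 0 \<and>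
     (\<forall>m. 0 < m \<and> m \<le> S_f f n \<longrightarrow>
        (\<exists>D. D \<subseteq> {d. d dvd n} \<and> m = (\<Sum>d\<in>D. f d)))"

definition has_density :: "(nat \<Rightarrow> bool) \<Rightarrow> real \<Rightarrow> bool" where
  "has_density P \<delta> \<longleftrightarrow>
     (\<lambda>x. real (card {n. 1 \<le> n \<and> n \<le> x \<and> P n}) / real x) \<longlonglongrightarrow> \<delta>"

end

theory Submission
  imports Defs "HOL-Number_Theory.Number_Theory"
begin


definition compl :: "(nat \<Rightarrow> nat) \<Rightarrow> nat set \<Rightarrow> bool" where
  "compl f X \<longleftrightarrow> (\<forall>m \<le> sum f X. \<exists>D\<subseteq>X. sum f D = m)"

lemma compl_ones:
  assumes "finite X" "\<And>x. x \<in> X \<Longrightarrow> f x = 1"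
  shows "compl f X"
  unfolding compl_def
proof (intro allI impI)
  fix m assume "m \<le> sum f X"
  with assms have "m \<le> card X" by simp
  then obtain D where "D \<subseteq> X" "card D = m" using obtain_subset_with_card_n by metis
  moreover have "sum f D = card D" using assms \<open>D \<subseteq> X\<close> by (simp add: subset_iff)
  ultimately show "\<exists>D\<subseteq>X. sum f D = m" by auto
qed

lemma compl_extend:
  assumes fX: "finite X" and fZ: "finite Z" and cX: "compl f X" and cZ: "compl f Z"
    and inj: "inj_on h Z" and disj: "X \<inter> h ` Z = {}"
    and fh: "\<And>z. z \<in> Z \<Longrightarrow> f (h z) = c * f z" and c: "0 < c" "c \<le> sum f X + 1"
  shows "compl f (X \<union> h ` Z)"
  unfolding compl_def
proof (intro allI impI)
  fix m assume m: "m \<le> sum f (X \<union> h ` Z)"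
  have sh: "sum f (h ` E) = c * sum f E" if "E \<subseteq> Z" for E
  proof -
    have "sum f (h ` E) = sum (f \<circ> h) E" using inj that by (intro sum.reindex) (auto intro: inj_on_subset)
    also have "\<dots> = sum (\<lambda>z. c * f z) E" using fh that by (intro sum.cong) auto
    finally show ?thesis by (simp add: sum_distrib_left)
  qed
  have "sum f (X \<union> h ` Z) = sum f X + sum f (h ` Z)" using disj fX fZ by (intro sum.union_disjoint) auto
  with sh[of Z] m have m': "m \<le> sum f X + c * sum f Z" by simp
  define k where "k = min (sum f Z) (m div c)"
  have "k \<le> sum f Z" unfolding k_def by simp
  then obtain E where E: "E \<subseteq> Z" "sum f E = k" using cZ unfolding compl_def by blast
  have "c * k \<le> m"
  proof -
    have "c * k \<le> c * (m div c)" unfolding k_def by simp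
    also have "\<dots> \<le> m" by simp
    finally show ?thesis .
  qed
  have r: "m - c * k \<le> sum f X"
  proof (cases "k = m div c")
    case True
    then have "m - c * k = m mod c" by (simp add: minus_mult_div_eq_mod)
    also have "\<dots> < c" using c by simp
    finally show ?thesis using c by simp
  next
    case False
    then have "k = sum f Z" unfolding k_def by (simp add: min_def split: if_splits)
    then show ?thesis using m' by simp
  qed
  obtain D where D: "D \<subseteq> X" "sum f D = m - c * k" using cX r unfolding compl_def by blast
  have "sum f (D \<union> h ` E) = sum f D + sum f (h ` E)"
    using D E disj fX fZ by (intro sum.union_disjoint) (auto intro: finite_subset)
  also have "\<dots> = m" using D E sh[OF E(1)] \<open>c * k \<le> m\<close> by simp
  finally show "\<exists>D\<subseteq>X \<union> h ` Z. sum f D = m" using D E by (intro exI[of _ "D \<union> h ` E"]) auto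
qed

definition fQ :: "nat set \<Rightarrow> nat \<Rightarrow> nat" where
  "fQ Q n = 3 ^ card {p \<in> prime_factors n. p \<notin> Q}"

lemma fQ_ge1: "fQ Q n \<ge> 1"
  unfolding fQ_def by simp

lemma fQ_1: "fQ Q 1 = 1"
  unfolding fQ_def by simp

lemma fQ_mult:
  assumes "a > 0" "b > 0" "coprime a b"
  shows "fQ Q (a * b) = fQ Q a * fQ Q b"
proof -
  have pf: "prime_factors (a * b) = prime_factors a \<union> prime_factors b"
    using assms by (intro prime_factors_product) auto
  have disj: "prime_factors a \<inter> prime_factors b = {}"
  proof (rule ccontr)
    assume "prime_factors a \<inter> prime_factors b \<noteq> {}"
    then obtain p where "p \<in> prime_factors a" "p \<in> prime_factors b" by blast
    then have "prime p" "p dvd a" "p dvd b" by auto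
    with assms(3) have "is_unit p" using coprime_common_divisor by blast
    with \<open>prime p\<close> show False by (simp add: not_prime_unit)
  qed
  have "{p \<in> prime_factors (a*b). p \<notin> Q} = {p \<in> prime_factors a. p \<notin> Q} \<union> {p \<in> prime_factors b. p \<notin> Q}"
    using pf by auto
  moreover have "card ({p \<in> prime_factors a. p \<notin> Q} \<union> {p \<in> prime_factors b. p \<notin> Q})
      = card {p \<in> prime_factors a. p \<notin> Q} + card {p \<in> prime_factors b. p \<notin> Q}"
    using disj by (intro card_Un_disjoint) auto
  ultimately show ?thesis unfolding fQ_def by (simp add: power_add)
qed

lemma fQ_dvd_mono:
  assumes "a dvd b" "b \<noteq> 0"
  shows "fQ Q a \<le> fQ Q b"
proof -
  have "prime_factors a \<subseteq> prime_factors b" using assms by (rule dvd_prime_factors[rotated])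
  then have "card {p \<in> prime_factors a. p \<notin> Q} \<le> card {p \<in> prime_factors b. p \<notin> Q}"
    by (intro card_mono) auto
  then show ?thesis unfolding fQ_def by simp
qed

lemma fQ_classF: "fQ Q \<in> classF"
  unfolding classF_def multiplicative_def
proof (intro CollectI conjI allI impI)
  show "fQ Q 1 = 1" by (rule fQ_1)
next
  fix a b :: nat assume "a > 0" "b > 0" "coprime a b"
  then show "fQ Q (a * b) = fQ Q a * fQ Q b" by (rule fQ_mult)
next
  fix p k :: nat assume "prime p" "1 \<le> k"
  then show "fQ Q (p ^ (k - 1)) \<le> fQ Q (p ^ k)"
    by (intro fQ_dvd_mono le_imp_power_dvd) auto
qed

lemma fQ_step:
  assumes "prime p" "p \<notin> Q" "d \<noteq> 0" "\<not> p dvd d"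
  shows "fQ Q (p ^ Suc j * d) = 3 * fQ Q d"
proof -
  have "prime_factors (p ^ Suc j * d) = prime_factors (p ^ Suc j) \<union> prime_factors d"
    using assms by (intro prime_factors_product) auto
  also have "prime_factors (p ^ Suc j) = {p}"
    using assms by (subst prime_factors_power) (auto simp: prime_prime_factors)
  finally have "{q \<in> prime_factors (p ^ Suc j * d). q \<notin> Q} = insert p {q \<in> prime_factors d. q \<notin> Q}"
    using assms by auto
  moreover have "p \<notin> {q \<in> prime_factors d. q \<notin> Q}" using assms by auto
  ultimately show ?thesis unfolding fQ_def by simp
qed

lemma fQ_ge3:
  assumes "d > 1" "d dvd n" "n > 0" "\<not> (\<exists>q\<in>Q. q dvd n)"
  shows "fQ Q d \<ge> 3"
proof -
  obtain p where p: "prime p" "p dvd d" using assms(1) prime_factor_nat by (metis less_irrefl)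
  then have "p \<notin> Q" using assms dvd_trans by blast
  with p assms have "p \<in> {q \<in> prime_factors d. q \<notin> Q}" by (auto simp: in_prime_factors_iff)
  moreover have "finite {q \<in> prime_factors d. q \<notin> Q}" by simp
  ultimately have "card {q \<in> prime_factors d. q \<notin> Q} \<ge> 1"
    using card_gt_0_iff by (metis One_nat_def Suc_leI empty_iff)
  then have "3 ^ 1 \<le> (3::nat) ^ card {q \<in> prime_factors d. q \<notin> Q}" by (intro power_increasing) auto
  then show ?thesis unfolding fQ_def by simp
qed

lemma practical_if_compl:
  assumes "n > 0" "compl f {d. d dvd n}"
  shows "f_practical f n"
  using assms unfolding f_practical_def compl_def S_f_def by (metis (no_types, lifting))

lemma not_practical:
  assumes "n > 0" "n \<noteq> 1" "\<not> (\<exists>q\<in>Q. q dvd n)"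
  shows "\<not> f_practical (fQ Q) n"
proof
  assume pr: "f_practical (fQ Q) n"
  have fin: "finite {d. d dvd n}" using assms by simp
  have "{1, n} \<subseteq> {d. d dvd n}" by auto
  then have "sum (fQ Q) {1, n} \<le> S_f (fQ Q) n" unfolding S_f_def using fin by (intro sum_mono2) auto
  moreover have "sum (fQ Q) {1, n} = 1 + fQ Q n" using assms by (simp add: fQ_def)
  moreover have "fQ Q n \<ge> 3" using assms by (intro fQ_ge3) auto
  ultimately have "2 \<le> S_f (fQ Q) n" by simp
  with pr have "\<exists>D. D \<subseteq> {d. d dvd n} \<and> 2 = sum (fQ Q) D" unfolding f_practical_def
    by (metis zero_less_numeral)
  then obtain D where D: "D \<subseteq> {d. d dvd n}" "2 = sum (fQ Q) D" by blast
  have finD: "finite D" using D fin finite_subset by blast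
  show False
  proof (cases "D \<subseteq> {1}")
    case True
    then have "D = {} \<or> D = {1}" by blast
    then show False
    proof
      assume "D = {}" then show False using D by simp
    next
      assume "D = {1}" then show False using D by (simp add: fQ_def)
    qed
  next
    case False
    then obtain d where d: "d \<in> D" "d \<noteq> 1" by blast
    then have "d dvd n" using D by auto
    then have "d > 0" using assms by (intro Nat.gr0I) auto
    then have "fQ Q d \<ge> 3" using d \<open>d dvd n\<close> assms by (intro fQ_ge3) auto
    moreover have "fQ Q d \<le> sum (fQ Q) D" using finD d by (intro member_le_sum) auto
    ultimately show False using D by simp
  qed
qed

lemma compl_div:
  assumes "\<forall>q\<in>Q. prime q"
  shows "n > 0 \<Longrightarrow> (\<exists>q\<in>Q. q dvd n) \<Longrightarrow> compl (fQ Q) {d. d dvd n}"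
proof (induction n rule: less_induct)
  case (less n)
  show ?case
  proof (cases "prime_factors n \<subseteq> Q")
    case True
    show ?thesis
    proof (rule compl_ones)
      show "finite {d. d dvd n}" using less.prems by simp
    next
      fix d assume "d \<in> {d. d dvd n}"
      then have "d dvd n" by simp
      then have "prime_factors d \<subseteq> prime_factors n" using less.prems by (intro dvd_prime_factors) auto
      then have "{p \<in> prime_factors d. p \<notin> Q} = {}" using True by auto
      then show "fQ Q d = 1" unfolding fQ_def by simp
    qed
  next
    case False
    then obtain p where p: "p \<in> prime_factors n" "p \<notin> Q" by blast
    then have pp: "prime p" "p dvd n" by auto
    obtain n' where n': "n = p ^ multiplicity p n * n'" "\<not> p dvd n'"
    proof -
      have "p \<noteq> 1" using pp(1) by auto
      then show ?thesis using multiplicity_decompose'[of n p] that less.prems by auto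
    qed
    define a where "a = multiplicity p n"
    have a: "a > 0" unfolding a_def using pp less.prems by (simp add: prime_multiplicity_gt_zero_iff)
    have n'pos: "n' > 0" using n' less.prems by (intro Nat.gr0I) auto
    have "p ^ a > 1" using a prime_gt_1_nat[OF pp(1)] by (intro one_less_power) auto
    then have "n' < n" using n' n'pos unfolding a_def[symmetric] by simp
    obtain q where q: "q \<in> Q" "q dvd n" using less.prems by blast
    have qp: "prime q" "q \<noteq> p" using q assms p by auto
    have "q dvd n'"
    proof -
      have "q dvd p ^ a * n'" using q n' unfolding a_def by simp
      then have "q dvd p ^ a \<or> q dvd n'" using qp prime_dvd_mult_iff by blast
      moreover have "\<not> q dvd p ^ a"
      proof
        assume "q dvd p ^ a"
        then have "q dvd p" using qp prime_dvd_power by blast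
        then show False using qp pp by (simp add: primes_dvd_imp_eq)
      qed
      ultimately show ?thesis by blast
    qed
    then have IH: "compl (fQ Q) {d. d dvd n'}" using less.IH[OF \<open>n' < n\<close> n'pos] q by blast
    define Dv where "Dv = {d. d dvd n'}"
    have finDv: "finite Dv" unfolding Dv_def using n'pos by simp
    define X where "X j = (\<Union>i\<in>{..j}. (\<lambda>d. p ^ i * d) ` Dv)" for j
    have finX: "finite (X j)" for j unfolding X_def using finDv by auto
    have DvX: "Dv \<subseteq> X j" for j unfolding X_def by force
    have sum2: "sum (fQ Q) Dv \<ge> 2"
    proof -
      have "{1, q} \<subseteq> Dv" unfolding Dv_def using \<open>q dvd n'\<close> by auto
      then have "sum (fQ Q) {1, q} \<le> sum (fQ Q) Dv" using finDv by (intro sum_mono2) auto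
      moreover have "sum (fQ Q) {1, q} = fQ Q 1 + fQ Q q" using prime_gt_1_nat[OF qp(1)] by simp
      moreover have "fQ Q 1 + fQ Q q \<ge> 2" using fQ_ge1[of Q 1] fQ_ge1[of Q q] by simp
      ultimately show ?thesis by simp
    qed
    have cX: "compl (fQ Q) (X j)" for j
    proof (induction j)
      case 0
      have "X 0 = Dv" unfolding X_def by simp
      then show ?case using IH Dv_def by simp
    next
      case (Suc j)
      have XS: "X (Suc j) = X j \<union> (\<lambda>d. p ^ Suc j * d) ` Dv"
        unfolding X_def by (simp add: atMost_Suc Un_commute)
      have "compl (fQ Q) (X j \<union> (\<lambda>d. p ^ Suc j * d) ` Dv)"
      proof (rule compl_extend[where c = 3])
        show "finite (X j)" by (rule finX)
        show "finite Dv" by (rule finDv)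
        show "compl (fQ Q) (X j)" by (rule Suc.IH)
        show "compl (fQ Q) Dv" using IH Dv_def by simp
        show "inj_on (\<lambda>d. p ^ Suc j * d) Dv" using pp by (intro inj_onI) (auto simp: prime_gt_0_nat)
        show "X j \<inter> (\<lambda>d. p ^ Suc j * d) ` Dv = {}"
        proof (rule ccontr)
          assume "X j \<inter> (\<lambda>d. p ^ Suc j * d) ` Dv \<noteq> {}"
          then obtain x where x: "x \<in> X j" "x \<in> (\<lambda>d. p ^ Suc j * d) ` Dv" by blast
          from x(1) obtain i d where id: "i \<le> j" "d \<in> Dv" "x = p ^ i * d" unfolding X_def by blast
          from x(2) obtain e where e: "e \<in> Dv" "x = p ^ Suc j * e" by blast
          have ide: "i \<le> j" "d \<in> Dv" "e \<in> Dv" "p ^ i * d = p ^ Suc j * e"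
            using id e by auto
          have "p ^ Suc j * e = p ^ i * (p ^ (Suc j - i) * e)"
            using ide(1) by (simp add: power_add[symmetric] mult.assoc)
          with ide(4) have "p ^ i * d = p ^ i * (p ^ (Suc j - i) * e)" by simp
          moreover have "p ^ i \<noteq> 0" using prime_gt_1_nat[OF pp(1)] by simp
          ultimately have "d = p ^ (Suc j - i) * e" by (subst (asm) mult_left_cancel) auto
          moreover have "Suc j - i > 0" using ide(1) by simp
          ultimately have "p dvd d" by (simp add: dvd_power)
          moreover have "d dvd n'" using ide Dv_def by simp
          ultimately show False using n'(2) dvd_trans by blast
        qed
        show "fQ Q (p ^ Suc j * z) = 3 * fQ Q z" if "z \<in> Dv" for z
        proof (rule fQ_step)
          show "prime p" "p \<notin> Q" by (fact pp(1), fact p(2))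
          show "z \<noteq> 0" using that n'pos Dv_def by auto
          show "\<not> p dvd z" using that n'(2) Dv_def dvd_trans by auto
        qed
        show "(0::nat) < 3" by simp
        have "sum (fQ Q) Dv \<le> sum (fQ Q) (X j)" using DvX finX by (intro sum_mono2) auto
        then show "3 \<le> sum (fQ Q) (X j) + 1" using sum2 by simp
      qed
      then show ?case using XS by simp
    qed
    have "{d. d dvd n} = X a"
    proof
      show "{d. d dvd n} \<subseteq> X a"
      proof
        fix d assume "d \<in> {d. d dvd n}"
        then have "d dvd p ^ a * n'" using n' a_def by simp
        then obtain b c where bc: "d = b * c" "b dvd p ^ a" "c dvd n'" using division_decomp by blast
        then obtain i where "i \<le> a" "b = p ^ i" using divides_primepow_nat pp by blast
        then show "d \<in> X a" unfolding X_def Dv_def using bc by auto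
      qed
    next
      show "X a \<subseteq> {d. d dvd n}"
      proof
        fix x assume "x \<in> X a"
        then obtain i d where "i \<le> a" "d dvd n'" "x = p ^ i * d" unfolding X_def Dv_def by auto
        moreover have "p ^ i dvd p ^ a" using \<open>i \<le> a\<close> by (rule le_imp_power_dvd)
        ultimately have "x dvd p ^ a * n'" by (simp add: mult_dvd_mono)
        then show "x \<in> {d. d dvd n}" using n' a_def by simp
      qed
    qed
    then show ?thesis using cX by simp
  qed
qed

lemma practical_char:
  assumes "\<forall>q\<in>Q. prime q"
  shows "f_practical (fQ Q) n \<longleftrightarrow> n > 0 \<and> (n = 1 \<or> (\<exists>q\<in>Q. q dvd n))"
proof
  assume "f_practical (fQ Q) n"
  then show "n > 0 \<and> (n = 1 \<or> (\<exists>q\<in>Q. q dvd n))"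
    using not_practical[of n Q] unfolding f_practical_def by blast
next
  assume h: "n > 0 \<and> (n = 1 \<or> (\<exists>q\<in>Q. q dvd n))"
  show "f_practical (fQ Q) n"
  proof (rule practical_if_compl)
    show "n > 0" using h by simp
    show "compl (fQ Q) {d. d dvd n}"
    proof (cases "n = 1")
      case True
      then show ?thesis by (intro compl_ones) (auto simp: fQ_def)
    next
      case False
      then show ?thesis using h compl_div[OF assms] by blast
    qed
  qed
qed



lemma coprime_shift: "coprime (k + q * M) M \<longleftrightarrow> coprime k (M::nat)"
proof -
  have "gcd (k + q * M) M = gcd M (q * M + k)" by (metis gcd.commute add.commute)
  also have "\<dots> = gcd M k" by (rule gcd_add_mult)
  also have "\<dots> = gcd k M" by (rule gcd.commute)
  finally show ?thesis by (simp only: coprime_iff_gcd_eq_1)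
qed

lemma count_mult:
  assumes "M > 0"
  shows "card {n. 1 \<le> n \<and> n \<le> q * M \<and> coprime n M} = q * totient M"
proof (induction q)
  case 0
  then show ?case by simp
next
  case (Suc q)
  have eq: "{n. 1 \<le> n \<and> n \<le> Suc q * M \<and> coprime n M} =
        {n. 1 \<le> n \<and> n \<le> q * M \<and> coprime n M} \<union> (\<lambda>k. k + q * M) ` totatives M"
  proof (intro equalityI subsetI)
    fix n assume "n \<in> {n. 1 \<le> n \<and> n \<le> Suc q * M \<and> coprime n M}"
    then have n: "1 \<le> n" "n \<le> Suc q * M" "coprime n M" by auto
    show "n \<in> {n. 1 \<le> n \<and> n \<le> q * M \<and> coprime n M} \<union> (\<lambda>k. k + q * M) ` totatives M"
    proof (cases "n \<le> q * M")
      case True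
      then have "n \<in> {n. 1 \<le> n \<and> n \<le> q * M \<and> coprime n M}" using n by simp
      then show ?thesis by (rule UnI1)
    next
      case False
      define k where "k = n - q * M"
      have nk: "n = k + q * M" using False k_def by simp
      have "coprime (k + q * M) M" using n(3) unfolding nk .
      then have "coprime k M" by (simp add: coprime_shift)
      moreover have "k > 0" using False unfolding k_def by linarith
      moreover have "k \<le> M" using n(2) unfolding k_def by simp
      ultimately have "n - q * M \<in> totatives M" using k_def by (simp add: in_totatives_iff)
      moreover have "n = (n - q * M) + q * M" using False by simp
      ultimately show ?thesis by blast
    qed
  next
    fix n assume "n \<in> {n. 1 \<le> n \<and> n \<le> q * M \<and> coprime n M} \<union> (\<lambda>k. k + q * M) ` totatives M"
    then show "n \<in> {n. 1 \<le> n \<and> n \<le> Suc q * M \<and> coprime n M}"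
    proof
      assume "n \<in> {n. 1 \<le> n \<and> n \<le> q * M \<and> coprime n M}" then show ?thesis by simp
    next
      assume "n \<in> (\<lambda>k. k + q * M) ` totatives M"
      then obtain k where k: "k \<in> totatives M" "n = k + q * M" by blast
      have km: "k > 0" "k \<le> M" "coprime k M" using k(1) by (auto simp: in_totatives_iff)
      then have "coprime (k + q * M) M" by (simp add: coprime_shift)
      moreover have "1 \<le> n" "n \<le> Suc q * M" using km k(2) by simp_all
      ultimately show ?thesis using k(2) by simp
    qed
  qed
  have c1: "card ({n. 1 \<le> n \<and> n \<le> q * M \<and> coprime n M} \<union> (\<lambda>k. k + q * M) ` totatives M)
     = card {n. 1 \<le> n \<and> n \<le> q * M \<and> coprime n M} + card ((\<lambda>k. k + q * M) ` totatives M)"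
  proof (rule card_Un_disjoint)
    show "finite {n. 1 \<le> n \<and> n \<le> q * M \<and> coprime n M}"
      by (rule finite_subset[of _ "{..q*M}"]) auto
    show "finite ((\<lambda>k. k + q * M) ` totatives M)" by simp
    show "{n. 1 \<le> n \<and> n \<le> q * M \<and> coprime n M} \<inter> (\<lambda>k. k + q * M) ` totatives M = {}"
    proof (rule equals0I)
      fix x assume "x \<in> {n. 1 \<le> n \<and> n \<le> q * M \<and> coprime n M} \<inter> (\<lambda>k. k + q * M) ` totatives M"
      then obtain k where "k \<in> totatives M" "x = k + q * M" "x \<le> q * M" by blast
      then show False by (simp add: in_totatives_iff)
    qed
  qed
  have c2: "card ((\<lambda>k. k + q * M) ` totatives M) = totient M"
    unfolding totient_def by (intro card_image) (auto simp: inj_on_def)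
  have "card {n. 1 \<le> n \<and> n \<le> Suc q * M \<and> coprime n M} = q * totient M + totient M"
    by (simp only: eq c1 c2 Suc.IH)
  then show ?case by simp
qed

lemma count_mono:
  assumes "a \<le> b"
  shows "card {n. 1 \<le> n \<and> n \<le> a \<and> coprime n (M::nat)} \<le> card {n. 1 \<le> n \<and> n \<le> b \<and> coprime n M}"
proof (rule card_mono)
  show "finite {n. 1 \<le> n \<and> n \<le> b \<and> coprime n M}"
    by (rule finite_subset[of _ "{..b}"]) auto
  show "{n. 1 \<le> n \<and> n \<le> a \<and> coprime n M} \<subseteq> {n. 1 \<le> n \<and> n \<le> b \<and> coprime n M}"
    using assms by auto
qed

lemma density_coprime:
  assumes M: "M > 0"
  shows "(\<lambda>x. real (card {n. 1 \<le> n \<and> n \<le> x \<and> coprime n M}) / real x)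
           \<longlonglongrightarrow> real (totient M) / real M"
proof -
  define C where "C x = card {n. 1 \<le> n \<and> n \<le> x \<and> coprime n M}" for x
  define t where "t = real (totient M)"
  define m where "m = real M"
  have t0: "t \<ge> 0" unfolding t_def by simp
  have m0: "m > 0" unfolding m_def using M by simp
  have bound: "\<bar>real (C x) / real x - t / m\<bar> \<le> t / real x" if x: "x > 0" for x
  proof -
    define q where "q = x div M"
    have dm: "x = q * M + x mod M" unfolding q_def by simp
    have "x mod M < M" using M by simp
    then have xq: "q * M \<le> x" "x < q * M + M" using dm by linarith+
    have e1: "C (q * M) = q * totient M" unfolding C_def by (rule count_mult[OF M])
    have e2: "C (Suc q * M) = Suc q * totient M" unfolding C_def by (rule count_mult[OF M])
    have "C (q * M) \<le> C x" unfolding C_def using xq by (intro count_mono) simp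
    then have n1: "q * totient M \<le> C x" using e1 by simp
    have "C x \<le> C (Suc q * M)" unfolding C_def using xq by (intro count_mono) simp
    then have n2: "C x \<le> Suc q * totient M" using e2 by simp
    have c1: "real q * t \<le> real (C x)" using n1 unfolding t_def by (metis of_nat_le_iff of_nat_mult)
    have "real (C x) \<le> real (Suc q * totient M)" using n2 by (simp only: of_nat_le_iff)
    then have c2: "real (C x) \<le> (real q + 1) * t" unfolding t_def by (simp add: algebra_simps)
    note c = c1 c2
    define X where "X = real x"
    have X0: "X > 0" unfolding X_def using x by simp
    have "real (q * M) \<le> real x" using xq(1) by (simp only: of_nat_le_iff)
    moreover have "real x < real (q * M + M)" using xq(2) by (simp only: of_nat_less_iff)
    ultimately have xq': "real q * m \<le> X" "X < real q * m + m" unfolding X_def m_def by simp_all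
    have lo: "real (C x) * m \<ge> t * X - t * m"
    proof -
      have "real (C x) * m \<ge> real q * t * m" using c(1) m0 by (intro mult_right_mono) auto
      moreover have "t * (X - m) \<le> t * (real q * m)" using xq' t0 by (intro mult_left_mono) auto
      ultimately show ?thesis by (simp add: algebra_simps)
    qed
    have hi: "real (C x) * m \<le> t * X + t * m"
    proof -
      have "real (C x) * m \<le> (real q + 1) * t * m" using c(2) m0 by (intro mult_right_mono) auto
      moreover have "t * (real q * m + m) \<le> t * (X + m)" using xq' t0 by (intro mult_left_mono) auto
      ultimately show ?thesis by (simp add: algebra_simps)
    qed
    have "\<bar>real (C x) * m - t * X\<bar> \<le> t * m" using lo hi by linarith
    then have "\<bar>real (C x) * m - t * X\<bar> / (X * m) \<le> t * m / (X * m)"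
      using X0 m0 by (intro divide_right_mono) auto
    moreover have "\<bar>real (C x) * m - t * X\<bar> / (X * m) = \<bar>real (C x) / X - t / m\<bar>"
      using X0 m0 by (simp add: field_simps abs_div)
    moreover have "t * m / (X * m) = t / X" using m0 by simp
    ultimately show ?thesis unfolding X_def by simp
  qed
  have "(\<lambda>x. real (C x) / real x - t / m) \<longlonglongrightarrow> 0"
  proof (rule Lim_null_comparison)
    show "\<forall>\<^sub>F x in sequentially. norm (real (C x) / real x - t / m) \<le> t / real x"
      using bound by (intro eventually_sequentiallyI[of 1]) auto
    show "(\<lambda>x. t / real x) \<longlonglongrightarrow> 0"
      using tendsto_mult_right_zero[OF lim_inverse_n', of t] by simp
  qed
  then show ?thesis unfolding C_def t_def m_def by (simp add: LIM_zero_iff)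
qed

lemma density_noncoprime:
  assumes "(\<lambda>x. real (card {n. 1 \<le> n \<and> n \<le> x \<and> coprime n (M::nat)}) / real x) \<longlonglongrightarrow> d"
  shows "has_density (\<lambda>n. n > 0 \<and> (n = 1 \<or> \<not> coprime n M)) (1 - d)"
  unfolding has_density_def
proof -
  define C where "C x = card {n. 1 \<le> n \<and> n \<le> x \<and> coprime n M}" for x
  have eq: "real (card {n. 1 \<le> n \<and> n \<le> x \<and> (n > 0 \<and> (n = 1 \<or> \<not> coprime n M))}) / real x
      = 1 - real (C x) / real x + 1 / real x" if x: "x \<ge> 1" for x
  proof -
    have "{n. 1 \<le> n \<and> n \<le> x \<and> (n > 0 \<and> (n = 1 \<or> \<not> coprime n M))}
        = insert 1 ({1..x} - {n. 1 \<le> n \<and> n \<le> x \<and> coprime n M})" using x by auto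
    moreover have "1 \<notin> {1..x} - {n. 1 \<le> n \<and> n \<le> x \<and> coprime n M}" using x by simp
    moreover have "card ({1..x} - {n. 1 \<le> n \<and> n \<le> x \<and> coprime n M}) = x - C x"
      unfolding C_def by (subst card_Diff_subset) auto
    moreover have "C x \<le> x"
    proof -
      have "C x \<le> card {1..x}" unfolding C_def by (intro card_mono) auto
      then show ?thesis by simp
    qed
    ultimately have "card {n. 1 \<le> n \<and> n \<le> x \<and> (n > 0 \<and> (n = 1 \<or> \<not> coprime n M))} = 1 + x - C x"
      by simp
    then have "real (card {n. 1 \<le> n \<and> n \<le> x \<and> (n > 0 \<and> (n = 1 \<or> \<not> coprime n M))}) = 1 + real x - real (C x)"
      using \<open>C x \<le> x\<close> by (simp add: of_nat_diff)
    then show ?thesis using x by (simp add: field_simps)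
  qed
  have "(\<lambda>x. 1 - real (C x) / real x + 1 / real x) \<longlonglongrightarrow> 1 - d + 0"
    using assms unfolding C_def by (intro tendsto_intros lim_inverse_n')
  then have "(\<lambda>x. 1 - real (C x) / real x + 1 / real x) \<longlonglongrightarrow> 1 - d" by simp
  then show "(\<lambda>x. real (card {n. 1 \<le> n \<and> n \<le> x \<and> (n > 0 \<and> (n = 1 \<or> \<not> coprime n M))}) / real x) \<longlonglongrightarrow> 1 - d"
    by (rule Lim_transform_eventually) (use eq in \<open>auto intro!: eventually_sequentiallyI[of 1]\<close>)
qed



lemma geom_le:
  fixes x :: real
  assumes "0 \<le> x" "x < 1"
  shows "(\<Sum>k\<le>N. x ^ k) \<le> 1 / (1 - x)"
proof -
  have "(1 - x) * (\<Sum>k<Suc N. x ^ k) = 1 - x ^ Suc N" by (rule one_diff_power_eq[symmetric])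
  also have "\<dots> \<le> 1" using assms by simp
  finally have "(1 - x) * (\<Sum>k\<le>N. x ^ k) \<le> 1" by (simp add: lessThan_Suc_atMost)
  then show ?thesis using assms by (simp add: field_simps)
qed

lemma mult_le_N:
  assumes "prime p" "0 < n" "n \<le> N"
  shows "multiplicity p n \<le> N"
proof -
  have "p ^ multiplicity p n dvd n" by (rule multiplicity_dvd)
  then have "p ^ multiplicity p n \<le> n" using assms by (intro dvd_imp_le) auto
  moreover have "multiplicity p n < 2 ^ multiplicity p n" by (rule less_exp)
  moreover have "2 ^ multiplicity p n \<le> p ^ multiplicity p n"
    using prime_ge_2_nat[OF assms(1)] by (intro power_mono) auto
  ultimately show ?thesis using assms by linarith
qed

lemma euler_bound:
  "harm N \<le> (\<Prod>p\<in>{p. prime p \<and> p \<le> N}. 1 / (1 - 1 / real p))"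
proof -
  define PS where "PS = {p. prime p \<and> p \<le> N}"
  have finPS: "finite PS" unfolding PS_def by simp
  define F where "F g = (\<Prod>p\<in>PS. (1 / real p) ^ g p)" for g :: "nat \<Rightarrow> nat"
  define h where "h n = restrict (\<lambda>p. multiplicity p n) PS" for n
  have Fh: "F (h n) = 1 / real n" if n: "n \<in> {1..N}" for n
  proof -
    have "F (h n) = (\<Prod>p\<in>PS. (1 / real p) ^ multiplicity p n)"
      unfolding F_def h_def by (intro prod.cong) auto
    also have "\<dots> = (\<Prod>p\<in>prime_factors n. (1 / real p) ^ multiplicity p n)"
    proof (rule prod.mono_neutral_right)
      show "finite PS" by (rule finPS)
      show "prime_factors n \<subseteq> PS"
      proof
        fix p assume "p \<in> prime_factors n"
        then have "prime p" "p dvd n" by auto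
        moreover from \<open>p dvd n\<close> have "p \<le> n" using n by (intro dvd_imp_le) auto
        ultimately show "p \<in> PS" unfolding PS_def using n by auto
      qed
      show "\<forall>p\<in>PS - prime_factors n. (1 / real p) ^ multiplicity p n = 1"
        using n by (auto simp: PS_def in_prime_factors_iff not_dvd_imp_multiplicity_0)
    qed
    also have "\<dots> = (\<Prod>p\<in>prime_factors n. 1 / real (p ^ multiplicity p n))"
      by (simp add: power_one_over)
    also have "\<dots> = 1 / (\<Prod>p\<in>prime_factors n. real (p ^ multiplicity p n))"
      by (simp add: prod_dividef)
    also have "(\<Prod>p\<in>prime_factors n. real (p ^ multiplicity p n)) = real n"
      using prime_factorization_nat[of n] n by (simp only: of_nat_prod[symmetric]) simp
    finally show ?thesis .
  qed
  have inj: "inj_on h {1..N}"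
  proof (rule inj_onI)
    fix a b assume ab: "a \<in> {1..N}" "b \<in> {1..N}" "h a = h b"
    show "a = b"
    proof (rule multiplicity_eq_nat)
      show "a > 0" "b > 0" using ab by auto
      fix p :: nat assume p: "prime p"
      show "multiplicity p a = multiplicity p b"
      proof (cases "p \<in> PS")
        case True
        then show ?thesis using fun_cong[OF ab(3), of p] unfolding h_def by simp
      next
        case False
        then have "p > N" using p unfolding PS_def by auto
        then have "\<not> p dvd a" "\<not> p dvd b" using ab by (auto dest: dvd_imp_le)
        then show ?thesis by (simp add: not_dvd_imp_multiplicity_0)
      qed
    qed
  qed
  have himg: "h ` {1..N} \<subseteq> PiE PS (\<lambda>_. {..N})"
  proof (rule image_subsetI)
    fix n assume n: "n \<in> {1..N}"
    show "h n \<in> PiE PS (\<lambda>_. {..N})" unfolding h_def restrict_PiE_iff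
    proof
      fix p assume "p \<in> PS"
      then have "prime p" unfolding PS_def by simp
      then show "multiplicity p n \<in> {..N}" using n mult_le_N by auto
    qed
  qed
  have "harm N = (\<Sum>n\<in>{1..N}. 1 / real n)"
    unfolding harm_def by (simp add: divide_inverse)
  also have "\<dots> = (\<Sum>n\<in>{1..N}. F (h n))" using Fh by simp
  also have "\<dots> = (\<Sum>g\<in>h ` {1..N}. F g)" using inj by (simp add: sum.reindex)
  also have "\<dots> \<le> (\<Sum>g\<in>PiE PS (\<lambda>_. {..N}). F g)"
    using himg finPS by (intro sum_mono2) (auto simp: F_def finite_PiE intro!: prod_nonneg)
  also have "\<dots> = (\<Prod>p\<in>PS. \<Sum>k\<le>N. (1 / real p) ^ k)"
    unfolding F_def using finPS by (intro prod_sum_PiE[symmetric]) auto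
  also have "\<dots> \<le> (\<Prod>p\<in>PS. 1 / (1 - 1 / real p))"
  proof (rule prod_mono)
    fix p assume "p \<in> PS"
    then have "real p \<ge> 2" unfolding PS_def using prime_ge_2_nat by auto
    then show "0 \<le> (\<Sum>k\<le>N. (1 / real p) ^ k) \<and> (\<Sum>k\<le>N. (1 / real p) ^ k) \<le> 1 / (1 - 1 / real p)"
      by (intro conjI sum_nonneg geom_le) auto
  qed
  finally show ?thesis unfolding PS_def .
qed

lemma factor_pos: "prime p \<Longrightarrow> 0 < 1 - 1 / real p"
proof -
  assume "prime p"
  then have "real p \<ge> 2" using prime_ge_2_nat by auto
  then show ?thesis by (simp add: field_simps)
qed

lemma prod_small:
  fixes K :: nat and z :: real
  assumes z: "z > 0"
  shows "\<exists>N\<ge>K. (\<Prod>p\<in>{p. prime p \<and> K < p \<and> p \<le> N}. 1 - 1 / real p) < z"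
proof -
  define c where "c = (\<Prod>p\<in>{p. prime p \<and> p \<le> K}. 1 - 1 / real p)"
  have c: "c > 0" unfolding c_def by (intro prod_pos ballI factor_pos) auto
  have "\<forall>Z. eventually (\<lambda>N. Z \<le> (harm N :: real)) sequentially"
    using harm_at_top by (simp add: filterlim_at_top)
  then obtain N0 where N0: "\<And>N. N \<ge> N0 \<Longrightarrow> 2 / (c * z) \<le> (harm N :: real)"
    unfolding eventually_sequentially by blast
  define N where "N = max N0 (max K 1)"
  have NK: "N \<ge> K" "N \<ge> 1" "N \<ge> N0" unfolding N_def by auto
  define A where "A = {p. prime p \<and> p \<le> N}"
  define B where "B = {p. prime p \<and> p \<le> K}"
  define D where "D = {p. prime p \<and> K < p \<and> p \<le> N}"
  have AU: "A = B \<union> D" unfolding A_def B_def D_def using NK by auto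
  have "(\<Prod>p\<in>A. 1 - 1 / real p) = c * (\<Prod>p\<in>D. 1 - 1 / real p)"
    unfolding AU c_def B_def[symmetric] by (intro prod.union_disjoint) (auto simp: B_def D_def)
  moreover have hA: "harm N \<le> 1 / (\<Prod>p\<in>A. 1 - 1 / real p)"
  proof -
    have "harm N \<le> (\<Prod>p\<in>A. 1 / (1 - 1 / real p))" unfolding A_def by (rule euler_bound)
    also have "\<dots> = 1 / (\<Prod>p\<in>A. 1 - 1 / real p)" by (simp add: prod_dividef)
    finally show ?thesis .
  qed
  moreover have PA: "(\<Prod>p\<in>A. 1 - 1 / real p) > 0" unfolding A_def by (intro prod_pos ballI factor_pos) auto
  moreover have hN: "harm N \<ge> 2 / (c * z)" using N0 NK by simp
  moreover have "2 / (c * z) > 0" using c z by simp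
  ultimately have "c * (\<Prod>p\<in>D. 1 - 1 / real p) \<le> 1 / harm N"
    by (metis (no_types, lifting) dual_order.strict_trans1 le_divide_eq mult.commute pos_le_divide_eq)
  also have "1 / harm N \<le> 1 / (2 / (c * z))"
  proof (rule divide_left_mono)
    show "2 / (c * z) \<le> harm N" by (rule hN)
    show "(0::real) \<le> 1" by simp
    have "harm N > (0::real)" using hN \<open>2 / (c * z) > 0\<close> by linarith
    then show "0 < harm N * (2 / (c * z))" using \<open>2 / (c * z) > 0\<close> by (rule mult_pos_pos)
  qed
  also have "\<dots> = c * z / 2" by simp
  finally have "c * (\<Prod>p\<in>D. 1 - 1 / real p) \<le> c * z / 2" .
  moreover have "c * z / 2 < c * z" using c z by simp
  ultimately have "c * (\<Prod>p\<in>D. 1 - 1 / real p) < c * z" by linarith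
  then have "(\<Prod>p\<in>D. 1 - 1 / real p) < z" using c by simp
  then show ?thesis using NK unfolding D_def by blast
qed


lemma coprime_prod_iff:
  fixes Q :: "nat set" and n :: nat
  assumes "finite Q" "\<forall>q\<in>Q. prime q"
  shows "(\<exists>q\<in>Q. q dvd n) \<longleftrightarrow> \<not> coprime n (\<Prod>Q)"
proof
  assume "\<exists>q\<in>Q. q dvd n"
  then obtain q where q: "q \<in> Q" "q dvd n" by blast
  have "q dvd \<Prod>Q" using assms(1) q(1) by (rule dvd_prodI)
  moreover have "prime q" using assms q by auto
  ultimately show "\<not> coprime n (\<Prod>Q)" using q(2)
    by (metis coprime_common_divisor not_prime_unit)
next
  assume nc: "\<not> coprime n (\<Prod>Q)"
  show "\<exists>q\<in>Q. q dvd n"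
  proof (rule ccontr)
    assume "\<not> (\<exists>q\<in>Q. q dvd n)"
    then have "\<And>q. q \<in> Q \<Longrightarrow> coprime n q"
    proof -
      fix q assume "q \<in> Q"
      then have "prime q" "\<not> q dvd n" using assms \<open>\<not> (\<exists>q\<in>Q. q dvd n)\<close> by auto
      then have "coprime q n" by (metis prime_imp_coprime_nat)
      then show "coprime n q" by (subst coprime_commute)
    qed
    then have "coprime n (\<Prod>Q)" by (rule prod_coprime_right)
    with nc show False by simp
  qed
qed

lemma dens_fQ:
  assumes fin: "finite Q" and pr: "\<forall>q\<in>Q. prime q"
  shows "has_density (f_practical (fQ Q)) (1 - (\<Prod>q\<in>Q. 1 - 1 / real q))"
proof -
  define M where "M = \<Prod>Q"
  have M0: "M > 0" unfolding M_def using pr by (intro prod_pos) (auto simp: prime_gt_0_nat)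
  have fp: "f_practical (fQ Q) = (\<lambda>n. n > 0 \<and> (n = 1 \<or> \<not> coprime n M))"
    using practical_char[OF pr] coprime_prod_iff[OF fin pr] unfolding M_def by auto
  have pfM: "prime_factors M = Q"
  proof -
    have "prime_factors M = \<Union> ((prime_factors \<circ> (\<lambda>x. x)) ` Q)" unfolding M_def
      using fin pr by (intro prime_factors_prod) auto
    also have "\<dots> = Q" using pr by (auto simp: prime_prime_factors)
    finally show ?thesis .
  qed
  have "real (totient M) / real M = (\<Prod>q\<in>Q. 1 - 1 / real q)"
    using totient_formula2[of M] M0 pfM by simp
  then show ?thesis using density_noncoprime[OF density_coprime[OF M0]] fp by simp
qed

lemma approx:
  fixes y \<epsilon> :: real
  assumes y: "0 \<le> y" "y \<le> 1" and e: "\<epsilon> > 0"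
  shows "\<exists>Q. finite Q \<and> (\<forall>q\<in>Q. prime q) \<and> \<bar>(\<Prod>q\<in>Q. 1 - 1 / real q) - y\<bar> < \<epsilon>"
proof -
  define K :: nat where "K = nat \<lceil>1 / \<epsilon>\<rceil> + 1"
  have "real K > 1 / \<epsilon>" unfolding K_def by linarith
  have K0: "K > 0" unfolding K_def by simp
  have "1 / real K < \<epsilon>" using \<open>real K > 1 / \<epsilon>\<close> e K0 by (simp add: field_simps)
  note K = this K0
  define S where "S N = {p. prime p \<and> K < p \<and> p \<le> N}" for N
  define P where "P N = (\<Prod>p\<in>S N. 1 - 1 / real p)" for N
  have finS: "finite (S N)" for N unfolding S_def by simp
  have P01: "0 \<le> P N \<and> P N \<le> 1" for N
  proof -
    have "\<forall>p\<in>S N. 0 \<le> 1 - 1 / real p \<and> 1 - 1 / real p \<le> 1"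
      unfolding S_def using factor_pos by (auto intro: less_imp_le)
    then show ?thesis unfolding P_def by (auto intro: prod_nonneg prod_le_1)
  qed
  have ex: "\<exists>N. P N < y + \<epsilon>" using prod_small[of "y + \<epsilon>" K] y e unfolding P_def S_def by auto
  define N0 where "N0 = (LEAST N. P N < y + \<epsilon>)"
  have N0: "P N0 < y + \<epsilon>" unfolding N0_def using ex by (rule LeastI_ex)
  have "y < P N0 + \<epsilon> \<and> P N0 < y + \<epsilon>"
  proof (cases "N0 \<le> K")
    case True
    then have "S N0 = {}" unfolding S_def by auto
    then have "P N0 = 1" unfolding P_def by simp
    then show ?thesis using N0 y e by simp
  next
    case False
    then obtain N1 where N1: "N0 = Suc N1" "K \<le> N1" by (metis less_Suc_eq_le not_le Suc_pred' gr_implies_not0 less_imp_Suc_add)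
    have "\<not> P N1 < y + \<epsilon>" unfolding N0_def using N1 by (intro not_less_Least) (simp add: N0_def)
    then have p1: "P N1 \<ge> y + \<epsilon>" by simp
    have "P N0 \<ge> P N1 - 1 / real N0"
    proof (cases "prime N0")
      case True
      then have "S N0 = insert N0 (S N1)" unfolding S_def using N1 by auto
      moreover have "N0 \<notin> S N1" unfolding S_def using N1 by auto
      ultimately have "P N0 = (1 - 1 / real N0) * P N1" unfolding P_def using finS by simp
      also have "\<dots> = P N1 - P N1 / real N0" by (simp add: algebra_simps)
      finally have eqP: "P N0 = P N1 - P N1 / real N0" .
      have "P N1 / real N0 \<le> 1 / real N0" using P01[of N1] by (intro divide_right_mono) auto
      then show ?thesis using eqP by linarith
    next
      case False
      then have "S N0 = S N1" unfolding S_def using N1 by (auto simp: le_Suc_eq)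
      then have "P N0 = P N1" unfolding P_def by simp
      moreover have "1 / real N0 \<ge> 0" by simp
      ultimately show ?thesis by linarith
    qed
    moreover have "1 / real N0 \<le> 1 / real K" using N1 K by (intro divide_left_mono) auto
    ultimately show ?thesis using p1 K N0 by linarith
  qed
  then have "\<bar>P N0 - y\<bar> < \<epsilon>" by linarith
  then show ?thesis using finS unfolding P_def S_def by blast
qed

theorem theorem1p7:
  shows "\<forall>x\<in>{0..1::real}. \<forall>\<epsilon>>0. \<exists>\<delta>.
           (\<exists>f\<in>classF. has_density (f_practical f) \<delta>) \<and> \<bar>\<delta> - x\<bar> < \<epsilon>"
proof (intro ballI allI impI)
  fix x :: real and \<epsilon> :: real
  assume x: "x \<in> {0..1}" and e: "\<epsilon> > 0"
  obtain Q where Q: "finite Q" "\<forall>q\<in>Q. prime q" "\<bar>(\<Prod>q\<in>Q. 1 - 1 / real q) - (1 - x)\<bar> < \<epsilon>"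
    using approx[of "1 - x" \<epsilon>] x e by auto
  show "\<exists>\<delta>. (\<exists>f\<in>classF. has_density (f_practical f) \<delta>) \<and> \<bar>\<delta> - x\<bar> < \<epsilon>"
  proof (intro exI conjI bexI)
    show "has_density (f_practical (fQ Q)) (1 - (\<Prod>q\<in>Q. 1 - 1 / real q))" using Q by (intro dens_fQ) auto
    show "fQ Q \<in> classF" by (rule fQ_classF)
    show "\<bar>(1 - (\<Prod>q\<in>Q. 1 - 1 / real q)) - x\<bar> < \<epsilon>" using Q(3) by linarith
  qed
qed

end
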